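(* Let $\rho$ be a $3$-dimensional continuous representation of $\mathcal{G}_{\mathbb{Q}_p}$ over $\overline{\mathbb{F}_p}$ of the form $\begin{psmallmatrix}\chi_1&\delta_a&\epsilon\\&\chi_2&\delta_b\\&&\chi_3\end{psmallmatrix}$ in a basis $e_1,e_2,e_3$, with characters $\chi_1,\chi_2,\chi_3$ satisfying $\chi_i\chi_j^{-1}\notin\{1,\omega,\omega^{-1}\}$ for $i\neq j$. Then $\Lambda^2\rho$ has length $3$ with a composition series whose successive factors (from sub to quotient) are $\chi_1\chi_2$, $\chi_1\chi_3$, $\chi_2\chi_3$. Moreover the socle (resp. cosocle) of $\Lambda^2\rho$ has the same dimension as the cosocle (resp. socle) of $\rho$.
   Context: $\omega$ is the mod $p$ cyclotomic character of $\mathcal{G}_{\mathbb{Q}_p}$; $\delta_a,\delta_b,\epsilon$ denote the off-diagonal entries of the matrix representation. *)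

theory Defs
  imports "HOL-Analysis.Analysis" "HOL-Computational_Algebra.Polynomial" "HOL-Algebra.Group"
begin

text \<open>Abstract setting: G is a group (standing in for the absolute Galois group of Q_p),
  k a field (standing in for an algebraic closure of F_p).\<close>

definition is_rep :: "('g, 'h) monoid_scheme \<Rightarrow> ('g \<Rightarrow> 'k::field ^'n ^'n) \<Rightarrow> bool" where
  "is_rep G R \<longleftrightarrow> R \<one>\<^bsub>G\<^esub> = mat 1 \<and>
     (\<forall>g\<in>carrier G. \<forall>h\<in>carrier G. R (g \<otimes>\<^bsub>G\<^esub> h) = R g ** R h)"

definition is_character :: "('g, 'h) monoid_scheme \<Rightarrow> ('g \<Rightarrow> 'k::field) \<Rightarrow> bool" where
  "is_character G c \<longleftrightarrow> c \<one>\<^bsub>G\<^esub> = 1 \<and> (\<forall>g\<in>carrier G. c g \<noteq> 0) \<and>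
     (\<forall>g\<in>carrier G. \<forall>h\<in>carrier G. c (g \<otimes>\<^bsub>G\<^esub> h) = c g * c h)"

definition char_eq :: "('g, 'h) monoid_scheme \<Rightarrow> ('g \<Rightarrow> 'k) \<Rightarrow> ('g \<Rightarrow> 'k) \<Rightarrow> bool" where
  "char_eq G c \<psi> \<longleftrightarrow> (\<forall>g\<in>carrier G. c g = \<psi> g)"

definition upper3 :: "'k::field \<Rightarrow> 'k \<Rightarrow> 'k \<Rightarrow> 'k \<Rightarrow> 'k \<Rightarrow> 'k \<Rightarrow> 'k ^3 ^3" where
  "upper3 a b c d e f = (\<chi> i j.
      if i = 1 \<and> j = 1 then a else if i = 1 \<and> j = 2 then d else if i = 1 \<and> j = 3 then f
      else if i = 2 \<and> j = 2 then b else if i = 2 \<and> j = 3 then e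
      else if i = 3 \<and> j = 3 then c else 0)"

text \<open>Second exterior power of a 3x3 matrix, in the basis e1/\e2, e1/\e3, e2/\e3
  (indices 1,2,3).\<close>
definition wedge_idx :: "3 \<Rightarrow> 3 \<times> 3" where
  "wedge_idx r = (if r = 1 then (1, 2) else if r = 2 then (1, 3) else (2, 3))"

definition ext2 :: "'k::comm_ring_1 ^3 ^3 \<Rightarrow> 'k ^3 ^3" where
  "ext2 A = (\<chi> r s. (case wedge_idx r of (i, j) \<Rightarrow> case wedge_idx s of (k, l) \<Rightarrow>
      A $ i $ k * A $ j $ l - A $ i $ l * A $ j $ k))"

definition invariant :: "('g, 'h) monoid_scheme \<Rightarrow> ('g \<Rightarrow> 'k::field ^'n ^'n) \<Rightarrow> ('k ^'n) set \<Rightarrow> bool" where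
  "invariant G R W \<longleftrightarrow> vec.subspace W \<and> (\<forall>g\<in>carrier G. \<forall>w\<in>W. R g *v w \<in> W)"

definition irreducible_sub :: "('g, 'h) monoid_scheme \<Rightarrow> ('g \<Rightarrow> 'k::field ^'n ^'n) \<Rightarrow> ('k ^'n) set \<Rightarrow> bool" where
  "irreducible_sub G R W \<longleftrightarrow> invariant G R W \<and> W \<noteq> {0} \<and>
     (\<forall>U. invariant G R U \<and> U \<subseteq> W \<longrightarrow> U = {0} \<or> U = W)"

definition maximal_sub :: "('g, 'h) monoid_scheme \<Rightarrow> ('g \<Rightarrow> 'k::field ^'n ^'n) \<Rightarrow> ('k ^'n) set \<Rightarrow> bool" where
  "maximal_sub G R W \<longleftrightarrow> invariant G R W \<and> W \<noteq> UNIV \<and>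
     (\<forall>U. invariant G R U \<and> W \<subseteq> U \<longrightarrow> U = W \<or> U = UNIV)"

definition socle :: "('g, 'h) monoid_scheme \<Rightarrow> ('g \<Rightarrow> 'k::field ^'n ^'n) \<Rightarrow> ('k ^'n) set" where
  "socle G R = vec.span (\<Union>{W. irreducible_sub G R W})"

text \<open>Radical: intersection of all maximal subrepresentations; the cosocle is V / radical.\<close>
definition radical :: "('g, 'h) monoid_scheme \<Rightarrow> ('g \<Rightarrow> 'k::field ^'n ^'n) \<Rightarrow> ('k ^'n) set" where
  "radical G R = \<Inter>{W. maximal_sub G R W}"

definition socle_dim :: "('g, 'h) monoid_scheme \<Rightarrow> ('g \<Rightarrow> 'k::field ^'n ^'n) \<Rightarrow> nat" where
  "socle_dim G R = vec.dim (socle G R)"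

definition cosocle_dim :: "('g, 'h) monoid_scheme \<Rightarrow> ('g \<Rightarrow> 'k::field ^'n ^'n) \<Rightarrow> nat" where
  "cosocle_dim G R = CARD('n) - vec.dim (radical G R)"

definition comp_series :: "('g, 'h) monoid_scheme \<Rightarrow> ('g \<Rightarrow> 'k::field ^'n ^'n) \<Rightarrow> ('k ^'n) set list \<Rightarrow> bool" where
  "comp_series G R Ws \<longleftrightarrow> Ws \<noteq> [] \<and> hd Ws = {0} \<and> last Ws = UNIV \<and>
     (\<forall>W\<in>set Ws. invariant G R W) \<and>
     (\<forall>i. Suc i < length Ws \<longrightarrow> Ws ! i \<subset> Ws ! Suc i \<and>
        (\<forall>U. invariant G R U \<and> Ws ! i \<subseteq> U \<and> U \<subseteq> Ws ! Suc i \<longrightarrow> U = Ws ! i \<or> U = Ws ! Suc i))"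

text \<open>Length of a representation: the number of factors of a composition series
  (well defined by Jordan-Hoelder).\<close>
definition rep_length :: "('g, 'h) monoid_scheme \<Rightarrow> ('g \<Rightarrow> 'k::field ^'n ^'n) \<Rightarrow> nat" where
  "rep_length G R = (THE m. \<exists>Ws. comp_series G R Ws \<and> length Ws = Suc m)"

definition factor_is :: "('g, 'h) monoid_scheme \<Rightarrow> ('g \<Rightarrow> 'k::field ^'n ^'n) \<Rightarrow> ('k ^'n) set \<Rightarrow> ('k ^'n) set \<Rightarrow> ('g \<Rightarrow> 'k) \<Rightarrow> bool" where
  "factor_is G R U W \<psi> \<longleftrightarrow> U \<subseteq> W \<and> vec.dim W = vec.dim U + 1 \<and>
     (\<forall>g\<in>carrier G. \<forall>w\<in>W. R g *v w - \<psi> g *s w \<in> U)"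

definition generic_pair :: "('g, 'h) monoid_scheme \<Rightarrow> ('g \<Rightarrow> 'k::field) \<Rightarrow> ('g \<Rightarrow> 'k) \<Rightarrow> ('g \<Rightarrow> 'k) \<Rightarrow> bool" where
  "generic_pair G \<omega> c \<psi> \<longleftrightarrow> \<not> char_eq G (\<lambda>g. c g / \<psi> g) (\<lambda>g. 1) \<and>
     \<not> char_eq G (\<lambda>g. c g / \<psi> g) \<omega> \<and> \<not> char_eq G (\<lambda>g. c g / \<psi> g) (\<lambda>g. inverse (\<omega> g))"

end

theory Submission
  imports Defs
begin

section \<open>A symmetric nondegenerate pairing on k^3\<close>

definition bf :: "'k::field ^3 \<Rightarrow> 'k ^3 \<Rightarrow> 'k" where
  "bf x y = x$1 * y$3 - x$2 * y$2 + x$3 * y$1"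

definition perp :: "('k::field ^3) set \<Rightarrow> ('k ^3) set" where
  "perp W = {y. \<forall>x\<in>W. bf x y = 0}"

lemma bf_sym: "bf x y = bf y x"
  by (simp add: bf_def algebra_simps)

lemma bf_add2: "bf b (x + y) = bf b x + bf b y"
  by (simp add: bf_def algebra_simps)
lemma bf_scale2: "bf b (c *s y) = c * bf b y"
  by (simp add: bf_def algebra_simps)
lemma bf_diff2: "bf b (x - y) = bf b x - bf b y"
  by (simp add: bf_def algebra_simps)
lemma bf_zero2: "bf b 0 = 0"
  by (simp add: bf_def)

lemma perp_subspace: "vec.subspace (perp W)"
  unfolding vec.subspace_def perp_def by (auto simp: bf_add2 bf_scale2 bf_zero2)

lemma perp_anti: "A \<subseteq> B \<Longrightarrow> perp B \<subseteq> perp A"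
  unfolding perp_def by auto

lemma perp_span: "perp (vec.span X) = perp X"
proof
  show "perp (vec.span X) \<subseteq> perp X" by (rule perp_anti[OF vec.span_superset])
  show "perp X \<subseteq> perp (vec.span X)"
  proof
    fix y assume y: "y \<in> perp X"
    have "vec.subspace {x. bf x y = 0}"
      unfolding vec.subspace_def by (auto simp: bf_sym[of _ y] bf_add2 bf_scale2 bf_zero2)
    moreover have "X \<subseteq> {x. bf x y = 0}" using y by (auto simp: perp_def)
    ultimately have "vec.span X \<subseteq> {x. bf x y = 0}" by (rule vec.span_minimal[rotated])
    then show "y \<in> perp (vec.span X)" by (auto simp: perp_def)
  qed
qed

lemma hyperplane_dim:
  assumes S: "vec.subspace S"
  shows "vec.dim S \<le> vec.dim (S \<inter> {y. bf b y = 0}) + 1"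
proof (cases "S \<subseteq> {y. bf b y = 0}")
  case True
  then have "S \<inter> {y. bf b y = 0} = S" by auto
  then show ?thesis by simp
next
  case False
  then obtain s0 where s0: "s0 \<in> S" "bf b s0 \<noteq> 0" by auto
  let ?K = "S \<inter> {y. bf b y = 0}"
  have "S \<subseteq> vec.span (insert s0 ?K)"
  proof
    fix s assume s: "s \<in> S"
    define t where "t = bf b s / bf b s0"
    have "s - t *s s0 \<in> ?K"
      using s s0 S by (simp add: t_def bf_diff2 bf_scale2 vec.subspace_diff vec.subspace_scale)
    then have "s - t *s s0 \<in> vec.span (insert s0 ?K)" by (simp add: vec.span_base)
    moreover have "t *s s0 \<in> vec.span (insert s0 ?K)"
      by (simp add: vec.span_base vec.span_scale)
    ultimately have "(s - t *s s0) + t *s s0 \<in> vec.span (insert s0 ?K)"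
      by (rule vec.span_add)
    then show "s \<in> vec.span (insert s0 ?K)" by simp
  qed
  then have "vec.dim S \<le> vec.dim (insert s0 ?K)" by (rule vec.dim_mono)
  also have "\<dots> \<le> vec.dim ?K + 1" by (simp add: vec.dim_insert)
  finally show ?thesis .
qed

lemma separation:
  assumes ind: "vec.independent X" and b: "b \<notin> vec.span X"
  shows "\<exists>y. (\<forall>x\<in>X. bf x y = 0) \<and> bf b y \<noteq> (0::'k::field)"
proof -
  let ?B = "insert b X"
  have indB: "vec.independent ?B" using ind b by (simp add: vec.independent_insertI)
  define \<phi> where "\<phi> = vec.construct ?B (\<lambda>z. if z = b then axis 1 1 else (0::'k^3))"
  have lin: "Vector_Spaces.linear (*s) (*s) \<phi>"
    unfolding \<phi>_def by (rule vec.linear_construct[OF indB])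
  define c where "c i = \<phi> (axis i 1) $ 1" for i
  define y :: "'k^3" where "y = (\<chi> i. if i = 1 then c 3 else if i = 2 then - c 2 else c 1)"
  have key: "bf z y = \<phi> z $ 1" for z
  proof -
    have "\<phi> z $ 1 = (\<Sum>i\<in>UNIV. z$i * c i)"
      using linear_componentwise[OF lin, of z 1] by (simp add: c_def)
    then show ?thesis by (simp add: bf_def y_def sum_3)
  qed
  have "bf x y = 0" if x: "x \<in> X" for x
  proof -
    have "x \<noteq> b" using x b vec.span_base by blast
    have "\<phi> x = 0" unfolding \<phi>_def
      by (subst vec.construct_basis[OF indB]) (use x \<open>x \<noteq> b\<close> in auto)
    then show ?thesis unfolding key by simp
  qed
  moreover have "bf b y \<noteq> 0"
  proof -
    have "\<phi> b = axis 1 1" unfolding \<phi>_def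
      by (subst vec.construct_basis[OF indB]) auto
    then show ?thesis unfolding key by (simp add: axis_def)
  qed
  ultimately show ?thesis by blast
qed

lemma perp_insert: "perp (insert b X) = perp X \<inter> {y. bf b y = 0}"
  unfolding perp_def by auto

lemma perp_empty: "perp {} = UNIV"
  unfolding perp_def by auto

lemma dim_UNIV3: "vec.dim (UNIV :: ('k::field^3) set) = 3"
proof -
  have "vec.dim (UNIV :: ('k::field^3) set) = CARD(3)" by (rule vec_dim_card)
  then show ?thesis by simp
qed

lemma perp_indep_dim:
  assumes "finite X" "vec.independent (X :: ('k::field^3) set)"
  shows "vec.dim (perp X) + card X = 3"
  using assms
proof (induction X rule: finite_induct)
  case empty
  show ?case using dim_UNIV3 by (simp only: perp_empty card.empty add_0_right)
next
  case (insert b X)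
  have indX: "vec.independent X" and bX: "b \<notin> vec.span X"
    using insert.prems insert.hyps(2) by (auto simp: vec.independent_insert)
  have IH: "vec.dim (perp X) + card X = 3" using insert.IH indX by simp
  have le: "vec.dim (perp X) \<le> vec.dim (perp (insert b X)) + 1"
    unfolding perp_insert by (rule hyperplane_dim[OF perp_subspace])
  obtain y where y: "\<forall>x\<in>X. bf x y = 0" "bf b y \<noteq> 0" using separation[OF indX bX] by blast
  have "perp (insert b X) \<subset> perp X"
    using y by (auto simp: perp_def)
  then have "vec.dim (perp (insert b X)) < vec.dim (perp X)"
    using vec.dim_psubset[of "perp (insert b X)" "perp X"] perp_subspace[THEN vec.span_eq_iff[THEN iffD2]]
    by metis
  then show ?case using IH le insert.hyps by simp
qed

lemma perp_dim:
  assumes W: "vec.subspace (W :: ('k::field^3) set)"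
  shows "vec.dim (perp W) + vec.dim W = 3"
proof -
  obtain B where B: "B \<subseteq> W" "vec.independent B" "W \<subseteq> vec.span B" "card B = vec.dim W"
    using vec.basis_exists by blast
  have "vec.span B \<subseteq> W" using B(1) W by (rule vec.span_minimal)
  with B(3) have "W = vec.span B" by auto
  then have "perp W = perp B" by (simp add: perp_span)
  moreover have "finite B" using B(2) by (rule vec.finiteI_independent)
  ultimately show ?thesis using perp_indep_dim[of B] B by simp
qed

lemma perp_perp:
  assumes W: "vec.subspace (W :: ('k::field^3) set)"
  shows "perp (perp W) = W"
proof -
  have sub: "W \<subseteq> perp (perp W)" unfolding perp_def by (auto simp: bf_sym)
  have "vec.dim (perp (perp W)) + vec.dim (perp W) = 3" by (rule perp_dim[OF perp_subspace])
  moreover have "vec.dim (perp W) + vec.dim W = 3" by (rule perp_dim[OF W])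
  ultimately have "vec.dim (perp (perp W)) \<le> vec.dim W" by simp
  then have "W = perp (perp W)"
    using vec.subspace_dim_equal[OF W perp_subspace sub] by simp
  then show ?thesis by simp
qed


lemma perp_Union: "perp (\<Union>C) = \<Inter>(perp ` C)"
  unfolding perp_def by auto

lemma perp_zero: "perp {0::'k::field^3} = UNIV"
  unfolding perp_def by (auto simp: bf_def)

lemma subspace_zero: "vec.subspace {0::'k::field^3}"
  unfolding vec.subspace_def by auto

lemma perp_UNIV: "perp (UNIV::('k::field^3) set) = {0}"
  using perp_perp[OF subspace_zero] perp_zero by metis

lemma perp_Inter:
  assumes "\<forall>A\<in>C. vec.subspace (A::('k::field^3) set)"
  shows "perp (\<Inter>C) = vec.span (\<Union>(perp ` C))"
proof -
  let ?S = "vec.span (\<Union>(perp ` C))"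
  have "perp ?S = \<Inter>((\<lambda>A. perp (perp A)) ` C)"
    by (simp add: perp_span perp_Union image_image)
  also have "\<dots> = \<Inter>C"
  proof -
    have "\<And>A. A \<in> C \<Longrightarrow> perp (perp A) = A" using assms perp_perp by blast
    then show ?thesis by auto
  qed
  finally have "perp (perp ?S) = perp (\<Inter>C)" by simp
  then show ?thesis using perp_perp[of ?S] by simp
qed

section \<open>Duality between representations\<close>

definition inv_ok :: "('g, 'h) monoid_scheme \<Rightarrow> ('g \<Rightarrow> 'k::field ^3 ^3) \<Rightarrow> bool" where
  "inv_ok G R \<longleftrightarrow> (\<forall>g\<in>carrier G. \<exists>h\<in>carrier G. \<forall>x. R g *v (R h *v x) = x)"

definition compat :: "('g, 'h) monoid_scheme \<Rightarrow> ('g \<Rightarrow> 'k::field ^3 ^3) \<Rightarrow> ('g \<Rightarrow> 'k ^3 ^3) \<Rightarrow> bool" where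
  "compat G R E \<longleftrightarrow> (\<forall>g\<in>carrier G. \<exists>c. \<forall>x y. bf (R g *v x) (E g *v y) = c * bf x y)"

lemma compat_sym: "compat G R E \<Longrightarrow> compat G E R"
  unfolding compat_def by (metis bf_sym)

lemma invariant_subspace: "invariant G R W \<Longrightarrow> vec.subspace W"
  by (simp add: invariant_def)

lemma invariant_perp:
  assumes C: "compat G R E" and I: "inv_ok G R" and W: "invariant G R W"
  shows "invariant G E (perp W)"
  unfolding invariant_def
proof (intro conjI ballI)
  show "vec.subspace (perp W)" by (rule perp_subspace)
  fix g y assume g: "g \<in> carrier G" and y: "y \<in> perp W"
  obtain h where h: "h \<in> carrier G" "\<And>x. R g *v (R h *v x) = x" using I g by (auto simp: inv_ok_def)
  obtain c where c: "\<And>x y. bf (R g *v x) (E g *v y) = c * bf x y" using C g unfolding compat_def by blast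
  show "E g *v y \<in> perp W"
    unfolding perp_def
  proof (intro CollectI ballI)
    fix x assume x: "x \<in> W"
    have "R h *v x \<in> W" using W h x by (auto simp: invariant_def)
    then have "bf (R h *v x) y = 0" using y by (auto simp: perp_def)
    then show "bf x (E g *v y) = 0" using c[of "R h *v x" y] h(2)[of x] by simp
  qed
qed

lemma irr_to_max:
  assumes C: "compat G R E" and I: "inv_ok G R" and I2: "inv_ok G E"
    and W: "irreducible_sub G R W"
  shows "maximal_sub G E (perp W)"
proof -
  have C2: "compat G E R" using C by (rule compat_sym)
  have WI: "invariant G R W" and W0: "W \<noteq> {0}"
    and Wm: "\<And>U. invariant G R U \<Longrightarrow> U \<subseteq> W \<Longrightarrow> U = {0} \<or> U = W"
    using W by (auto simp: irreducible_sub_def)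
  have Ws: "vec.subspace W" using WI by (rule invariant_subspace)
  have "perp W \<noteq> UNIV"
  proof
    assume "perp W = UNIV"
    then have "perp (perp W) = {0}" by (simp add: perp_UNIV)
    then show False using perp_perp[OF Ws] W0 by simp
  qed
  moreover have "U = perp W \<or> U = UNIV" if U: "invariant G E U" "perp W \<subseteq> U" for U
  proof -
    have Us: "vec.subspace U" using U(1) by (rule invariant_subspace)
    have "invariant G R (perp U)" by (rule invariant_perp[OF C2 I2 U(1)])
    moreover have "perp U \<subseteq> W" using perp_anti[OF U(2)] perp_perp[OF Ws] by simp
    ultimately have "perp U = {0} \<or> perp U = W" using Wm by blast
    then have "perp (perp U) = UNIV \<or> perp (perp U) = perp W" using perp_zero by metis
    then show ?thesis using perp_perp[OF Us] by auto
  qed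
  ultimately show ?thesis
    unfolding maximal_sub_def using invariant_perp[OF C I WI] by blast
qed

lemma max_to_irr:
  assumes C: "compat G R E" and I: "inv_ok G R" and I2: "inv_ok G E"
    and W: "maximal_sub G R W"
  shows "irreducible_sub G E (perp W)"
proof -
  have C2: "compat G E R" using C by (rule compat_sym)
  have WI: "invariant G R W" and W0: "W \<noteq> UNIV"
    and Wm: "\<And>U. invariant G R U \<Longrightarrow> W \<subseteq> U \<Longrightarrow> U = W \<or> U = UNIV"
    using W by (auto simp: maximal_sub_def)
  have Ws: "vec.subspace W" using WI by (rule invariant_subspace)
  have "perp W \<noteq> {0}"
  proof
    assume "perp W = {0}"
    then have "perp (perp W) = UNIV" by (simp add: perp_zero)
    then show False using perp_perp[OF Ws] W0 by simp
  qed
  moreover have "U = {0} \<or> U = perp W" if U: "invariant G E U" "U \<subseteq> perp W" for U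
  proof -
    have Us: "vec.subspace U" using U(1) by (rule invariant_subspace)
    have "invariant G R (perp U)" by (rule invariant_perp[OF C2 I2 U(1)])
    moreover have "W \<subseteq> perp U" using perp_anti[OF U(2)] perp_perp[OF Ws] by simp
    ultimately have "perp U = W \<or> perp U = UNIV" using Wm by blast
    then have "perp (perp U) = perp W \<or> perp (perp U) = {0}" using perp_UNIV by metis
    then show ?thesis using perp_perp[OF Us] by auto
  qed
  ultimately show ?thesis
    unfolding irreducible_sub_def using invariant_perp[OF C I WI] by blast
qed

lemma irr_set:
  assumes C: "compat G R E" and I: "inv_ok G R" and I2: "inv_ok G E"
  shows "{Y. irreducible_sub G E Y} = perp ` {M. maximal_sub G R M}"
proof
  have C2: "compat G E R" using C by (rule compat_sym)
  show "{Y. irreducible_sub G E Y} \<subseteq> perp ` {M. maximal_sub G R M}"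
  proof
    fix Y assume Y: "Y \<in> {Y. irreducible_sub G E Y}"
    then have "maximal_sub G R (perp Y)" using irr_to_max[OF C2 I2 I] by simp
    moreover have "Y = perp (perp Y)"
    proof -
      have "vec.subspace Y" using Y by (simp add: irreducible_sub_def invariant_def)
      then show ?thesis using perp_perp by metis
    qed
    ultimately show "Y \<in> perp ` {M. maximal_sub G R M}" by blast
  qed
  show "perp ` {M. maximal_sub G R M} \<subseteq> {Y. irreducible_sub G E Y}"
    using max_to_irr[OF C I I2] by blast
qed

lemma max_set:
  assumes C: "compat G R E" and I: "inv_ok G R" and I2: "inv_ok G E"
  shows "{Y. maximal_sub G E Y} = perp ` {M. irreducible_sub G R M}"
proof
  have C2: "compat G E R" using C by (rule compat_sym)
  show "{Y. maximal_sub G E Y} \<subseteq> perp ` {M. irreducible_sub G R M}"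
  proof
    fix Y assume Y: "Y \<in> {Y. maximal_sub G E Y}"
    then have "irreducible_sub G R (perp Y)" using max_to_irr[OF C2 I2 I] by simp
    moreover have "Y = perp (perp Y)"
    proof -
      have "vec.subspace Y" using Y by (simp add: maximal_sub_def invariant_def)
      then show ?thesis using perp_perp by metis
    qed
    ultimately show "Y \<in> perp ` {M. irreducible_sub G R M}" by blast
  qed
  show "perp ` {M. irreducible_sub G R M} \<subseteq> {Y. maximal_sub G E Y}"
    using irr_to_max[OF C I I2] by blast
qed

lemma radical_subspace: "vec.subspace (radical G R)"
  unfolding radical_def
  by (rule vec.subspace_Inter) (auto simp: maximal_sub_def invariant_def)

lemma socle_subspace: "vec.subspace (socle G R)"
  unfolding socle_def by simp

lemma duality_dims:
  fixes R E :: "'g \<Rightarrow> 'k::field ^3 ^3"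
  assumes C: "compat G R E" and I: "inv_ok G R" and I2: "inv_ok G E"
  shows "socle_dim G E = cosocle_dim G R \<and> cosocle_dim G E = socle_dim G R"
proof
  have "socle G E = vec.span (\<Union>(perp ` {M. maximal_sub G R M}))"
    unfolding socle_def irr_set[OF C I I2] ..
  also have "\<dots> = perp (radical G R)"
    unfolding radical_def
    by (rule perp_Inter[symmetric]) (auto simp: maximal_sub_def invariant_def)
  finally have "socle G E = perp (radical G R)" .
  then show "socle_dim G E = cosocle_dim G R"
    using perp_dim[OF radical_subspace, of G R] by (simp add: socle_dim_def cosocle_dim_def)
  have "radical G E = \<Inter>(perp ` {M. irreducible_sub G R M})"
    unfolding radical_def max_set[OF C I I2] ..
  also have "\<dots> = perp (socle G R)"
    unfolding socle_def perp_span perp_Union ..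
  finally have "radical G E = perp (socle G R)" .
  then show "cosocle_dim G E = socle_dim G R"
    using perp_dim[OF socle_subspace, of G R] by (simp add: socle_dim_def cosocle_dim_def)
qed


section \<open>Upper triangular representations\<close>

definition F1 :: "('k::field ^3) set" where "F1 = {x. \<forall>i. i \<notin> {1} \<longrightarrow> x$i = 0}"
definition F2 :: "('k::field ^3) set" where "F2 = {x. \<forall>i. i \<notin> {1,2} \<longrightarrow> x$i = 0}"

lemma F1_mem: "x \<in> F1 \<longleftrightarrow> x$2 = 0 \<and> x$3 = 0"
  by (auto simp: F1_def forall_3)
lemma F2_mem: "x \<in> F2 \<longleftrightarrow> x$3 = 0"
  by (auto simp: F2_def forall_3)

lemma F1_dim: "vec.dim (F1::('k::field ^3) set) = 1"
  unfolding F1_def dim_substandard_cart by simp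
lemma F2_dim: "vec.dim (F2::('k::field ^3) set) = 2"
  unfolding F2_def dim_substandard_cart by simp

lemma upper3_mv:
  "(upper3 a b c d e f *v x) $ 1 = a * x$1 + d * x$2 + f * x$3"
  "(upper3 a b c d e f *v x) $ 2 = b * x$2 + e * x$3"
  "(upper3 a b c d e f *v x) $ 3 = c * x$3"
  by (simp_all add: matrix_vector_mult_def sum_3 upper3_def)

definition upper_rep :: "('g, 'h) monoid_scheme \<Rightarrow> ('g \<Rightarrow> 'k::field ^3 ^3) \<Rightarrow> ('g \<Rightarrow> 'k) \<Rightarrow> ('g \<Rightarrow> 'k) \<Rightarrow> ('g \<Rightarrow> 'k) \<Rightarrow> bool" where
  "upper_rep G E a b c \<longleftrightarrow> (\<forall>g\<in>carrier G. \<exists>d e f. E g = upper3 (a g) (b g) (c g) d e f)"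

lemma mv_scale: "A *v (t *s x) = t *s (A *v (x::'k::field^'n))"
  by (simp add: vec_eq_iff matrix_vector_mult_def sum_distrib_left algebra_simps)

lemma subspace_pre: 
  assumes "vec.subspace X"
  shows "vec.subspace {z. A *v z \<in> X}"
  using assms unfolding vec.subspace_def
  by (auto simp: matrix_vector_right_distrib mv_scale)

lemma between_dim:
  assumes A: "vec.subspace A" and B: "vec.subspace B" and U: "vec.subspace U"
    and "A \<subseteq> U" "U \<subseteq> B" "vec.dim B = vec.dim A + 1"
  shows "U = A \<or> U = B"
proof -
  have "vec.dim A \<le> vec.dim U" using vec.dim_subset[OF \<open>A \<subseteq> U\<close>] .
  moreover have "vec.dim U \<le> vec.dim B" using vec.dim_subset[OF \<open>U \<subseteq> B\<close>] .
  then have "vec.dim U \<le> vec.dim A \<or> vec.dim B \<le> vec.dim U" using assms by linarith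
  then show ?thesis
    using vec.subspace_dim_equal[OF A U \<open>A \<subseteq> U\<close>] vec.subspace_dim_equal[OF U B \<open>U \<subseteq> B\<close>]
    by auto
qed

lemma span_helper:
  assumes "r \<in> U" "y = r + t *s v"
  shows "y \<in> vec.span (insert v U)"
  using assms by (simp add: vec.span_add vec.span_base vec.span_scale)

lemma pick:
  assumes up: "upper_rep G E a b c"
    and U: "invariant G E U" and W: "invariant G E W" and UW: "U \<subset> W"
  shows "\<exists>v\<in>W. v \<notin> U \<and> (\<forall>g\<in>carrier G. E g *v v \<in> vec.span (insert v U))"
proof -
  have Ws: "vec.subspace W" using W by (simp add: invariant_def)
  have Wi: "\<And>g w. g \<in> carrier G \<Longrightarrow> w \<in> W \<Longrightarrow> E g *v w \<in> W" using W by (simp add: invariant_def)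
  have diffW: "E g *v v - t *s v \<in> W" if "g \<in> carrier G" "v \<in> W" for g v t
    using Wi[OF that] that(2) Ws by (simp add: vec.subspace_diff vec.subspace_scale)
  show ?thesis
  proof (cases "\<exists>v\<in>W. v \<notin> U \<and> v \<in> F1")
    case True
    then obtain v where v: "v \<in> W" "v \<notin> U" "v \<in> F1" by blast
    have "E g *v v \<in> vec.span (insert v U)" if g: "g \<in> carrier G" for g
    proof -
      obtain d e f where E: "E g = upper3 (a g) (b g) (c g) d e f" using up g by (auto simp: upper_rep_def)
      have "E g *v v = 0 + a g *s v" using v(3) by (simp add: vec_eq_iff forall_3 E upper3_mv F1_mem)
      then show ?thesis using U by (intro span_helper[of 0]) (auto simp: invariant_def vec.subspace_0)
    qed
    then show ?thesis using v by blast
  next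
    case False
    then have WF1: "\<And>v. v \<in> W \<Longrightarrow> v \<in> F1 \<Longrightarrow> v \<in> U" by blast
    show ?thesis
    proof (cases "\<exists>v\<in>W. v \<notin> U \<and> v \<in> F2")
      case True
      then obtain v where v: "v \<in> W" "v \<notin> U" "v \<in> F2" by blast
      have "E g *v v \<in> vec.span (insert v U)" if g: "g \<in> carrier G" for g
      proof -
        obtain d e f where E: "E g = upper3 (a g) (b g) (c g) d e f" using up g by (auto simp: upper_rep_def)
        have "E g *v v - b g *s v \<in> F1" using v(3) by (simp add: F1_mem E upper3_mv F2_mem)
        then have "E g *v v - b g *s v \<in> U" using WF1 diffW[OF g v(1)] by blast
        then show ?thesis by (rule span_helper[where t="b g"]) simp
      qed
      then show ?thesis using v by blast
    next
      case False
      then have WF2: "\<And>v. v \<in> W \<Longrightarrow> v \<in> F2 \<Longrightarrow> v \<in> U" by blast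
      obtain v where v: "v \<in> W" "v \<notin> U" using UW by blast
      have "E g *v v \<in> vec.span (insert v U)" if g: "g \<in> carrier G" for g
      proof -
        obtain d e f where E: "E g = upper3 (a g) (b g) (c g) d e f" using up g by (auto simp: upper_rep_def)
        have "E g *v v - c g *s v \<in> F2" by (simp add: E upper3_mv F2_mem)
        then have "E g *v v - c g *s v \<in> U" using WF2 diffW[OF g v(1)] by blast
        then show ?thesis by (rule span_helper[where t="c g"]) simp
      qed
      then show ?thesis using v by blast
    qed
  qed
qed

lemma step_dim:
  assumes up: "upper_rep G E a b c"
    and U: "invariant G E U" and W: "invariant G E W" and UW: "U \<subset> W"
    and between: "\<forall>X. invariant G E X \<and> U \<subseteq> X \<and> X \<subseteq> W \<longrightarrow> X = U \<or> X = W"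
  shows "vec.dim W = vec.dim U + 1"
proof -
  obtain v where v: "v \<in> W" "v \<notin> U" "\<And>g. g \<in> carrier G \<Longrightarrow> E g *v v \<in> vec.span (insert v U)"
    using pick[OF up U W UW] by blast
  have Us: "vec.subspace U" and Ws: "vec.subspace W" using U W by (auto simp: invariant_def)
  let ?X = "vec.span (insert v U)"
  have "invariant G E ?X"
    unfolding invariant_def
  proof (intro conjI ballI)
    show "vec.subspace ?X" by simp
    fix g z assume g: "g \<in> carrier G" and z: "z \<in> ?X"
    have "insert v U \<subseteq> {z. E g *v z \<in> ?X}"
      using v(3)[OF g] U g by (auto simp: invariant_def intro: vec.span_base)
    then have "?X \<subseteq> {z. E g *v z \<in> ?X}"
      by (rule vec.span_minimal) (rule subspace_pre, simp)
    then show "E g *v z \<in> ?X" using z by blast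
  qed
  moreover have "U \<subseteq> ?X" by (meson subset_insertI vec.span_superset order_trans)
  moreover have "?X \<subseteq> W" using v(1) UW Ws by (intro vec.span_minimal) auto
  ultimately have "?X = U \<or> ?X = W" using between by blast
  moreover have "?X \<noteq> U" using v(2) vec.span_base[of v "insert v U"] by auto
  ultimately have "?X = W" by blast
  moreover have "vec.dim ?X = vec.dim U + 1"
  proof -
    have nv: "v \<notin> vec.span U" using v(2) Us vec.span_eq_iff by blast
    then show ?thesis by (simp add: vec.dim_insert)
  qed
  ultimately show ?thesis by simp
qed

lemma comp_len:
  assumes up: "upper_rep G E a b c" and cs: "comp_series G E Ws"
  shows "length Ws = 4"
proof -
  have ne: "Ws \<noteq> []" and hd: "hd Ws = {0}" and lst: "last Ws = UNIV"
    and inv: "\<And>W. W \<in> set Ws \<Longrightarrow> invariant G E W"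
    and st: "\<And>i. Suc i < length Ws \<Longrightarrow> Ws ! i \<subset> Ws ! Suc i \<and>
        (\<forall>U. invariant G E U \<and> Ws ! i \<subseteq> U \<and> U \<subseteq> Ws ! Suc i \<longrightarrow> U = Ws ! i \<or> U = Ws ! Suc i)"
    using cs by (auto simp: comp_series_def)
  have "vec.dim (Ws ! i) = i" if "i < length Ws" for i
    using that
  proof (induction i)
    case 0
    then show ?case using hd ne by (simp add: hd_conv_nth[symmetric])
  next
    case (Suc i)
    have "vec.dim (Ws ! Suc i) = vec.dim (Ws ! i) + 1"
      using st[OF Suc.prems] Suc.prems
      by (intro step_dim[OF up]) (auto intro: inv nth_mem)
    then show ?case using Suc by simp
  qed
  moreover have "Ws ! (length Ws - 1) = UNIV" using lst ne by (simp add: last_conv_nth)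
  ultimately have "length Ws - 1 = 3" using ne dim_UNIV3
    by (metis diff_less length_greater_0_conv zero_less_one)
  then show ?thesis using ne by (cases Ws) auto
qed

lemma upper_invariants:
  fixes E :: "'g \<Rightarrow> 'k::field ^3 ^3"
  assumes up: "upper_rep G E a b c"
  shows "invariant G E {0}" "invariant G E F1" "invariant G E F2" "invariant G E UNIV"
proof -
  have s1: "vec.subspace (F1::('k^3) set)" by (auto simp: vec.subspace_def F1_mem)
  have s2: "vec.subspace (F2::('k^3) set)" by (auto simp: vec.subspace_def F2_mem)
  show "invariant G E {0}" unfolding invariant_def using subspace_zero by simp
  show "invariant G E UNIV" unfolding invariant_def by simp
  show "invariant G E F1" unfolding invariant_def
  proof (intro conjI ballI s1)
    fix g and w :: "'k^3" assume g: "g \<in> carrier G" and w: "w \<in> F1"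
    obtain d e f where E: "E g = upper3 (a g) (b g) (c g) d e f" using up g by (auto simp: upper_rep_def)
    show "E g *v w \<in> F1" using w by (simp add: E F1_mem upper3_mv)
  qed
  show "invariant G E F2" unfolding invariant_def
  proof (intro conjI ballI s2)
    fix g and w :: "'k^3" assume g: "g \<in> carrier G" and w: "w \<in> F2"
    obtain d e f where E: "E g = upper3 (a g) (b g) (c g) d e f" using up g by (auto simp: upper_rep_def)
    show "E g *v w \<in> F2" using w by (simp add: E F2_mem upper3_mv)
  qed
qed


lemma dim_zero3: "vec.dim {0::'k::field^3} = 0"
  by simp

lemma list4_steps:
  assumes "P A B" "P B C" "P C D"
  shows "\<forall>i. Suc i < length [A,B,C,D] \<longrightarrow> P ([A,B,C,D]!i) ([A,B,C,D]!Suc i)"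
proof (intro allI impI)
  fix i assume "Suc i < length [A,B,C,D]"
  then have "i = 0 \<or> i = 1 \<or> i = 2" by auto
  then show "P ([A,B,C,D]!i) ([A,B,C,D]!Suc i)" using assms by (auto simp: numeral_2_eq_2)
qed

lemma upper_series:
  fixes E :: "'g \<Rightarrow> 'k::field ^3 ^3"
  assumes up: "upper_rep G E a b c"
  shows "comp_series G E [{0}, F1, F2, UNIV] \<and> factor_is G E {0} F1 a
    \<and> factor_is G E F1 F2 b \<and> factor_is G E F2 UNIV c"
proof -
  note inv = upper_invariants[OF up]
  have sub: "vec.subspace X" if "invariant G E X" for X using that by (simp add: invariant_def)
  have d0: "vec.dim {0::'k^3} = 0" and d1: "vec.dim (F1::('k^3) set) = 1"
    and d2: "vec.dim (F2::('k^3) set) = 2" and d3: "vec.dim (UNIV::('k^3) set) = 3"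
    by (simp_all only: dim_zero3 F1_dim F2_dim dim_UNIV3)
  have i01: "{0::'k^3} \<subseteq> F1" and i12: "(F1::('k^3) set) \<subseteq> F2" and i23: "(F2::('k^3) set) \<subseteq> UNIV"
    by (auto simp: F1_mem F2_mem)
  have link: "A \<subset> B \<and> (\<forall>U. invariant G E U \<and> A \<subseteq> U \<and> U \<subseteq> B \<longrightarrow> U = A \<or> U = B)"
    if "invariant G E A" "invariant G E B" "A \<subseteq> B" "vec.dim B = vec.dim A + 1" for A B
  proof
    show "A \<subset> B" using that by auto
    show "\<forall>U. invariant G E U \<and> A \<subseteq> U \<and> U \<subseteq> B \<longrightarrow> U = A \<or> U = B"
      using that between_dim sub by blast
  qed
  have e1: "vec.dim (F1::('k^3) set) = vec.dim {0::'k^3} + 1" using d0 d1 by simp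
  have e2: "vec.dim (F2::('k^3) set) = vec.dim (F1::('k^3) set) + 1" using d1 d2 by simp
  have e3: "vec.dim (UNIV::('k^3) set) = vec.dim (F2::('k^3) set) + 1" using d2 d3 by simp
  note L1 = link[OF inv(1) inv(2) i01 e1] and L2 = link[OF inv(2) inv(3) i12 e2]
    and L3 = link[OF inv(3) inv(4) i23 e3]
  let ?L = "[{0::'k^3}, F1, F2, UNIV]"
  have cs: "comp_series G E ?L"
    unfolding comp_series_def
  proof (intro conjI)
    show "\<forall>W\<in>set ?L. invariant G E W" using inv by auto
    show "\<forall>i. Suc i < length ?L \<longrightarrow> ?L ! i \<subset> ?L ! Suc i \<and>
      (\<forall>U. invariant G E U \<and> ?L ! i \<subseteq> U \<and> U \<subseteq> ?L ! Suc i \<longrightarrow> U = ?L ! i \<or> U = ?L ! Suc i)"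
      by (rule list4_steps[where P="\<lambda>X Y. X \<subset> Y \<and> (\<forall>U. invariant G E U \<and> X \<subseteq> U \<and> U \<subseteq> Y \<longrightarrow> U = X \<or> U = Y)", OF L1 L2 L3])
  qed auto
  have f1: "factor_is G E {0} F1 a"
    unfolding factor_is_def
  proof (intro conjI ballI)
    show "{0::'k^3} \<subseteq> F1" by (rule i01)
    show "vec.dim (F1::('k^3) set) = vec.dim {0::'k^3} + 1" using d0 d1 by simp
    fix g w assume g: "g \<in> carrier G" and w: "(w::'k^3) \<in> F1"
    obtain d e f where E: "E g = upper3 (a g) (b g) (c g) d e f" using up g by (auto simp: upper_rep_def)
    show "E g *v w - a g *s w \<in> {0}" using w by (simp add: vec_eq_iff forall_3 E upper3_mv F1_mem)
  qed
  have f2: "factor_is G E F1 F2 b"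
    unfolding factor_is_def
  proof (intro conjI ballI)
    show "(F1::('k^3) set) \<subseteq> F2" by (rule i12)
    show "vec.dim (F2::('k^3) set) = vec.dim (F1::('k^3) set) + 1" using d1 d2 by simp
    fix g w assume g: "g \<in> carrier G" and w: "(w::'k^3) \<in> F2"
    obtain d e f where E: "E g = upper3 (a g) (b g) (c g) d e f" using up g by (auto simp: upper_rep_def)
    show "E g *v w - b g *s w \<in> F1" using w by (simp add: E upper3_mv F1_mem F2_mem)
  qed
  have f3: "factor_is G E F2 UNIV c"
    unfolding factor_is_def
  proof (intro conjI ballI)
    show "F2 \<subseteq> UNIV" by simp
    show "vec.dim (UNIV::('k^3) set) = vec.dim (F2::('k^3) set) + 1" using d2 d3 by simp
    fix g w assume g: "g \<in> carrier G" and w: "(w::'k^3) \<in> UNIV"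
    obtain d e f where E: "E g = upper3 (a g) (b g) (c g) d e f" using up g by (auto simp: upper_rep_def)
    show "E g *v w - c g *s w \<in> F2" by (simp add: E upper3_mv F2_mem)
  qed
  show ?thesis using cs f1 f2 f3 by blast
qed

lemma upper_length:
  fixes E :: "'g \<Rightarrow> 'k::field ^3 ^3"
  assumes up: "upper_rep G E a b c"
  shows "rep_length G E = 3"
  unfolding rep_length_def
proof (rule the_equality)
  show "\<exists>Ws. comp_series G E Ws \<and> length Ws = Suc 3"
    using upper_series[OF up] by (intro exI[of _ "[{0}, F1, F2, UNIV]"]) auto
  show "m = 3" if "\<exists>Ws. comp_series G E Ws \<and> length Ws = Suc m" for m
    using that comp_len[OF up] by fastforce
qed

section \<open>Exterior square identities\<close>

definition dd :: "'k::field ^3^3 \<Rightarrow> 'k" where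
  "dd A = A$1$1*(A$2$2*A$3$3 - A$2$3*A$3$2) - A$1$2*(A$2$1*A$3$3 - A$2$3*A$3$1) + A$1$3*(A$2$1*A$3$2 - A$2$2*A$3$1)"

lemma widx: "wedge_idx 1 = (1,2)" "wedge_idx 2 = (1,3)" "wedge_idx 3 = (2,3)"
  by (simp_all add: wedge_idx_def)

lemma ext2_upper3: "ext2 (upper3 a b c d e f) = upper3 (a*b) (a*c) (b*c) (a*e) (d*c) (d*e - f*(b::'k::field))"
  by (simp add: vec_eq_iff forall_3 ext2_def widx upper3_def)

lemma bf_compat: "bf (A *v x) (ext2 A *v y) = dd A * bf x (y::'k::field^3)"
  by (simp add: bf_def dd_def matrix_vector_mult_def sum_3 ext2_def widx) algebra

lemma ext2_mult: "ext2 (A ** B) = ext2 A ** ext2 (B::'k::field^3^3)"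
  by (simp add: vec_eq_iff forall_3 matrix_matrix_mult_def sum_3 ext2_def widx) algebra

lemma ext2_one: "ext2 (mat 1) = (mat 1::'k::field^3^3)"
  by (simp add: vec_eq_iff forall_3 mat_def ext2_def widx)

theorem mainTheorem10:
  fixes G :: "('g, 'h) monoid_scheme"
    and p :: nat
    and \<omega> chi1 chi2 chi3 \<delta>a \<delta>b \<epsilon> :: "'g \<Rightarrow> 'k::alg_closed_field"
    and \<rho> :: "'g \<Rightarrow> 'k ^3 ^3"
  assumes "group G"
    and "prime p" and "CHAR('k) = p"
    and "is_character G \<omega>"
    and "is_character G chi1" and "is_character G chi2" and "is_character G chi3"
    and "is_rep G \<rho>"
    and "\<forall>g\<in>carrier G. \<rho> g = upper3 (chi1 g) (chi2 g) (chi3 g) (\<delta>a g) (\<delta>b g) (\<epsilon> g)"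
    and "generic_pair G \<omega> chi1 chi2" and "generic_pair G \<omega> chi2 chi1"
    and "generic_pair G \<omega> chi1 chi3" and "generic_pair G \<omega> chi3 chi1"
    and "generic_pair G \<omega> chi2 chi3" and "generic_pair G \<omega> chi3 chi2"
  shows "rep_length G (\<lambda>g. ext2 (\<rho> g)) = 3
    \<and> (\<exists>W1 W2. comp_series G (\<lambda>g. ext2 (\<rho> g)) [{0}, W1, W2, UNIV]
          \<and> factor_is G (\<lambda>g. ext2 (\<rho> g)) {0} W1 (\<lambda>g. chi1 g * chi2 g)
          \<and> factor_is G (\<lambda>g. ext2 (\<rho> g)) W1 W2 (\<lambda>g. chi1 g * chi3 g)
          \<and> factor_is G (\<lambda>g. ext2 (\<rho> g)) W2 UNIV (\<lambda>g. chi2 g * chi3 g))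
    \<and> socle_dim G (\<lambda>g. ext2 (\<rho> g)) = cosocle_dim G \<rho>
    \<and> cosocle_dim G (\<lambda>g. ext2 (\<rho> g)) = socle_dim G \<rho>"
proof -
  let ?E = "\<lambda>g. ext2 (\<rho> g)"
  have grp: "group G" by fact
  have rep1: "\<rho> \<one>\<^bsub>G\<^esub> = mat 1" and repm: "\<And>g h. g \<in> carrier G \<Longrightarrow> h \<in> carrier G \<Longrightarrow> \<rho> (g \<otimes>\<^bsub>G\<^esub> h) = \<rho> g ** \<rho> h"
    using \<open>is_rep G \<rho>\<close> by (auto simp: is_rep_def)
  have up: "upper_rep G ?E (\<lambda>g. chi1 g * chi2 g) (\<lambda>g. chi1 g * chi3 g) (\<lambda>g. chi2 g * chi3 g)"
    unfolding upper_rep_def using assms(9) by (auto simp: ext2_upper3)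
  have invm: "\<rho> g ** \<rho> (inv\<^bsub>G\<^esub> g) = mat 1" if g: "g \<in> carrier G" for g
    using repm[OF g group.inv_closed[OF grp g]] group.r_inv[OF grp g] rep1 by simp
  have I1: "inv_ok G \<rho>"
    unfolding inv_ok_def
  proof
    fix g assume g: "g \<in> carrier G"
    show "\<exists>h\<in>carrier G. \<forall>x. \<rho> g *v (\<rho> h *v x) = x"
      using group.inv_closed[OF grp g] invm[OF g]
      by (intro bexI[of _ "inv\<^bsub>G\<^esub> g"]) (auto simp: matrix_vector_mul_assoc)
  qed
  have I2: "inv_ok G ?E"
    unfolding inv_ok_def
  proof
    fix g assume g: "g \<in> carrier G"
    have "ext2 (\<rho> g) ** ext2 (\<rho> (inv\<^bsub>G\<^esub> g)) = mat 1"
      using invm[OF g] by (simp add: ext2_mult[symmetric] ext2_one)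
    then show "\<exists>h\<in>carrier G. \<forall>x. ?E g *v (?E h *v x) = x"
      using group.inv_closed[OF grp g]
      by (intro bexI[of _ "inv\<^bsub>G\<^esub> g"]) (auto simp: matrix_vector_mul_assoc)
  qed
  have C: "compat G \<rho> ?E"
    unfolding compat_def using bf_compat by blast
  show ?thesis
    using upper_length[OF up] upper_series[OF up] duality_dims[OF C I1 I2] by blast
qed

end
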